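(* Let $\phi:M_2\to M_2$ be a linear map with $\sigma_{\mathcal{K}}(\phi(A))=\sigma_{\mathcal{K}}(A)$ for all $A\in M_2$. Then there exist $b\ge 0$ and signs $s,t\in\{1,-1\}$ such that $$\phi(E_{21})=\begin{bmatrix} s\sqrt{b^2+b} & -t\,b\\ t(b+1) & -s\sqrt{b^2+b}\end{bmatrix}.$$
   Context: $M_2$: real $2\times2$ matrices; $E_{21}$ is the matrix with $1$ in position $(2,1)$ and $0$ elsewhere. Lorentz cone $\mathcal{K}=\{(x_1,x_2)^T:|x_1|\le x_2\}$; a real $\lambda$ is an L-eigenvalue of $A$ if there is a nonzero $x\in\mathcal{K}$ with $(A-\lambda I)x\in\mathcal{K}$ and $x^T(A-\lambda I)x=0$; $\sigma_{\mathcal{K}}(A)$ is the set of L-eigenvalues. *)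

theory Defs
  imports "HOL-Analysis.Analysis"
begin

definition lorentz_cone :: "(real^2) set" where
  "lorentz_cone = {x. \<bar>x $ 1\<bar> \<le> x $ 2}"

definition L_eig :: "real^2^2 \<Rightarrow> real set" where
  "L_eig A = {l. \<exists>x. x \<noteq> 0 \<and> x \<in> lorentz_cone \<and>
      (A - l *\<^sub>R mat 1) *v x \<in> lorentz_cone \<and>
      x \<bullet> ((A - l *\<^sub>R mat 1) *v x) = 0}"

definition E21 :: "real^2^2" where
  "E21 = (\<chi> i j. if i = 2 \<and> j = 1 then 1 else 0)"

end

theory Submission
  imports Defs
begin


lemma mv2: "((A::real^2^2) - l *\<^sub>R mat 1) *v x = vector [(A$1$1 - l)*x$1 + A$1$2*x$2, A$2$1*x$1 + (A$2$2 - l)*x$2]"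
  by (simp add: vec_eq_iff forall_2 matrix_vector_mult_def sum_2 mat_def algebra_simps)

lemma L_eig_real: "l \<in> L_eig A \<longleftrightarrow> (\<exists>x1 x2. (x1 \<noteq> 0 \<or> x2 \<noteq> 0) \<and> \<bar>x1\<bar> \<le> x2 \<and>
   \<bar>(A$1$1 - l)*x1 + A$1$2*x2\<bar> \<le> A$2$1*x1 + (A$2$2 - l)*x2 \<and>
   x1*((A$1$1 - l)*x1 + A$1$2*x2) + x2*(A$2$1*x1 + (A$2$2 - l)*x2) = 0)"
proof
  assume "l \<in> L_eig A"
  then obtain x where "x \<noteq> 0" "x \<in> lorentz_cone" "(A - l *\<^sub>R mat 1) *v x \<in> lorentz_cone"
    "x \<bullet> ((A - l *\<^sub>R mat 1) *v x) = 0" unfolding L_eig_def by blast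
  then show "\<exists>x1 x2. (x1 \<noteq> 0 \<or> x2 \<noteq> 0) \<and> \<bar>x1\<bar> \<le> x2 \<and>
   \<bar>(A$1$1 - l)*x1 + A$1$2*x2\<bar> \<le> A$2$1*x1 + (A$2$2 - l)*x2 \<and>
   x1*((A$1$1 - l)*x1 + A$1$2*x2) + x2*(A$2$1*x1 + (A$2$2 - l)*x2) = 0"
    by (intro exI[of _ "x$1"] exI[of _ "x$2"])
       (auto simp: mv2 lorentz_cone_def inner_vec_def sum_2 vec_eq_iff forall_2)
next
  assume "\<exists>x1 x2. (x1 \<noteq> 0 \<or> x2 \<noteq> 0) \<and> \<bar>x1\<bar> \<le> x2 \<and>
   \<bar>(A$1$1 - l)*x1 + A$1$2*x2\<bar> \<le> A$2$1*x1 + (A$2$2 - l)*x2 \<and>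
   x1*((A$1$1 - l)*x1 + A$1$2*x2) + x2*(A$2$1*x1 + (A$2$2 - l)*x2) = 0"
  then obtain x1 x2 where h: "(x1 \<noteq> 0 \<or> x2 \<noteq> 0)" "\<bar>x1\<bar> \<le> x2"
   "\<bar>(A$1$1 - l)*x1 + A$1$2*x2\<bar> \<le> A$2$1*x1 + (A$2$2 - l)*x2"
   "x1*((A$1$1 - l)*x1 + A$1$2*x2) + x2*(A$2$1*x1 + (A$2$2 - l)*x2) = 0" by blast
  show "l \<in> L_eig A" unfolding L_eig_def
    apply (rule CollectI, rule exI[of _ "vector [x1, x2]"])
    using h by (auto simp: mv2 lorentz_cone_def inner_vec_def sum_2 vec_eq_iff forall_2)
qed



lemma par_char:
  fixes a c d e l :: real
  shows "(\<exists>x1 x2. (x1 \<noteq> 0 \<or> x2 \<noteq> 0) \<and> \<bar>x1\<bar> \<le> x2 \<and>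
   \<bar>(a - l)*x1 + c*x2\<bar> \<le> d*x1 + (e - l)*x2 \<and>
   x1*((a - l)*x1 + c*x2) + x2*(d*x1 + (e - l)*x2) = 0) \<longleftrightarrow>
   (l = (a+c+d+e)/2 \<and> (-a-c+d+e)/2 \<ge> 0) \<or> (l = (a-c-d+e)/2 \<and> (-a+c-d+e)/2 \<ge> 0) \<or>
   (\<exists>\<alpha>>0. \<exists>\<beta>>0. ((a+c+d+e)/2 - l)*\<alpha> + (-a+c-d+e)/2*\<beta> = 0 \<and>
        (-a-c+d+e)/2*\<alpha> + ((a-c-d+e)/2 - l)*\<beta> = 0)"
  (is "?L \<longleftrightarrow> ?R")
proof
  assume ?L
  then obtain x1 x2 where h: "(x1 \<noteq> 0 \<or> x2 \<noteq> 0)" "\<bar>x1\<bar> \<le> x2"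
   "\<bar>(a - l)*x1 + c*x2\<bar> \<le> d*x1 + (e - l)*x2"
   "x1*((a - l)*x1 + c*x2) + x2*(d*x1 + (e - l)*x2) = 0" by blast
  define \<alpha> where "\<alpha> = (x1+x2)/2"
  define \<beta> where "\<beta> = (x2-x1)/2"
  define Y1 where "Y1 = ((a+c+d+e)/2 - l)*\<alpha> + (-a+c-d+e)/2*\<beta>"
  define Y2 where "Y2 = (-a-c+d+e)/2*\<alpha> + ((a-c-d+e)/2 - l)*\<beta>"
  have x1: "x1 = \<alpha> - \<beta>" and x2: "x2 = \<alpha> + \<beta>" by (simp_all add: \<alpha>_def \<beta>_def field_simps)
  have ab: "\<alpha> \<ge> 0" "\<beta> \<ge> 0" "\<alpha> > 0 \<or> \<beta> > 0" using h(1,2) by (auto simp: \<alpha>_def \<beta>_def)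
  have Y1e: "2*Y1 = (a - l)*x1 + c*x2 + (d*x1 + (e - l)*x2)"
    unfolding Y1_def x1 x2 by (simp add: field_simps)
  have Y2e: "2*Y2 = (d*x1 + (e - l)*x2) - ((a - l)*x1 + c*x2)"
    unfolding Y2_def x1 x2 by (simp add: field_simps)
  have Y: "Y1 \<ge> 0" "Y2 \<ge> 0" using h(3) Y1e Y2e by linarith+
  have "x1*((a - l)*x1 + c*x2) + x2*(d*x1 + (e - l)*x2) = 2*(\<alpha>*Y1 + \<beta>*Y2)"
    unfolding Y1_def Y2_def x1 x2 by (simp add: field_simps)
  with h(4) have s: "\<alpha>*Y1 + \<beta>*Y2 = 0" by simp
  have p1: "\<alpha>*Y1 \<ge> 0" "\<beta>*Y2 \<ge> 0" using ab Y by simp_all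
  have z: "\<alpha>*Y1 = 0" "\<beta>*Y2 = 0" using s p1 by linarith+
  show ?R
  proof (cases "\<beta> = 0")
    case True
    then have "\<alpha> > 0" using ab by simp
    then have "Y1 = 0" using z by simp
    then have "l = (a+c+d+e)/2" using `\<alpha> > 0` True unfolding Y1_def by simp
    moreover have "(-a-c+d+e)/2 \<ge> 0" using Y(2) True `\<alpha> > 0` unfolding Y2_def
      by (simp add: zero_le_mult_iff)
    ultimately show ?thesis by blast
  next
    case False
    then have b: "\<beta> > 0" using ab by simp
    then have "Y2 = 0" using z by simp
    show ?thesis
    proof (cases "\<alpha> = 0")
      case True
      then have "l = (a-c-d+e)/2" using b `Y2 = 0` unfolding Y2_def by simp
      moreover have "(-a+c-d+e)/2 \<ge> 0" using Y(1) True b unfolding Y1_def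
        by (simp add: zero_le_mult_iff)
      ultimately show ?thesis by blast
    next
      case False
      then have "\<alpha> > 0" using ab by simp
      then have "Y1 = 0" using z by simp
      then show ?thesis using `Y2 = 0` `\<alpha> > 0` b unfolding Y1_def Y2_def by blast
    qed
  qed
next
  assume ?R
  then show ?L
  proof (elim disjE)
    assume H: "l = (a+c+d+e)/2 \<and> (-a-c+d+e)/2 \<ge> 0"
    show ?L
      apply (rule exI[of _ 1], rule exI[of _ 1]) using H by (simp add: field_simps)
  next
    assume H: "l = (a-c-d+e)/2 \<and> (-a+c-d+e)/2 \<ge> 0"
    show ?L
      apply (rule exI[of _ "-1"], rule exI[of _ 1]) using H by (simp add: field_simps)
  next
    assume "\<exists>\<alpha>>0. \<exists>\<beta>>0. ((a+c+d+e)/2 - l)*\<alpha> + (-a+c-d+e)/2*\<beta> = 0 \<and>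
        (-a-c+d+e)/2*\<alpha> + ((a-c-d+e)/2 - l)*\<beta> = 0"
    then obtain \<alpha> \<beta> where H: "\<alpha> > 0" "\<beta> > 0" "((a+c+d+e)/2 - l)*\<alpha> + (-a+c-d+e)/2*\<beta> = 0"
        "(-a-c+d+e)/2*\<alpha> + ((a-c-d+e)/2 - l)*\<beta> = 0" by blast
    have e1: "(a - l)*(\<alpha>-\<beta>) + c*(\<alpha>+\<beta>) + (d*(\<alpha>-\<beta>) + (e - l)*(\<alpha>+\<beta>)) = 0"
      using H(3) by (simp add: field_simps)
    have e2: "(d*(\<alpha>-\<beta>) + (e - l)*(\<alpha>+\<beta>)) - ((a - l)*(\<alpha>-\<beta>) + c*(\<alpha>+\<beta>)) = 0"
      using H(4) by (simp add: field_simps)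
    have y1: "(a - l)*(\<alpha>-\<beta>) + c*(\<alpha>+\<beta>) = 0" and y2: "d*(\<alpha>-\<beta>) + (e - l)*(\<alpha>+\<beta>) = 0"
      using e1 e2 by linarith+
    show ?L
      apply (rule exI[of _ "\<alpha>-\<beta>"], rule exI[of _ "\<alpha>+\<beta>"])
      using H(1,2) y1 y2 by auto
  qed
qed



definition PS :: "real \<Rightarrow> real \<Rightarrow> real \<Rightarrow> real \<Rightarrow> real \<Rightarrow> bool" where
  "PS p q r w l \<longleftrightarrow> (l = p \<and> r \<ge> 0) \<or> (l = w \<and> q \<ge> 0) \<or>
     (\<exists>\<alpha>>0. \<exists>\<beta>>0. (p - l)*\<alpha> + q*\<beta> = 0 \<and> r*\<alpha> + (w - l)*\<beta> = 0)"

lemma key: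
  fixes p q r w :: real
  assumes h1: "PS p q r w (1/2)" and h2: "PS p q r w 0" and h3: "\<not> PS p q r w (-1/2)"
    and h4: "PS (-p) (-q) (-r) (-w) (1/2)" and h5: "\<not> PS (-p) (-q) (-r) (-w) (-1/2)"
  shows "((p = 1/2 \<and> w = -1/2 \<and> q < 0 \<and> r > 0) \<or> (p = -1/2 \<and> w = 1/2 \<and> q > 0 \<and> r < 0)) \<and> q*r = -1/4"
proof -
  have n1: "\<not>(\<exists>\<alpha>>0. \<exists>\<beta>>0. (p - 1/2)*\<alpha> + q*\<beta> = 0 \<and> r*\<alpha> + (w - 1/2)*\<beta> = 0)"
  proof
    assume "\<exists>\<alpha>>0. \<exists>\<beta>>0. (p - 1/2)*\<alpha> + q*\<beta> = 0 \<and> r*\<alpha> + (w - 1/2)*\<beta> = 0"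
    then obtain \<alpha> \<beta> where "\<alpha>>0" "\<beta>>0" "(p - 1/2)*\<alpha> + q*\<beta> = 0" "r*\<alpha> + (w - 1/2)*\<beta> = 0" by blast
    then have "(-p - (-1/2))*\<alpha> + (-q)*\<beta> = 0" "(-r)*\<alpha> + (-w - (-1/2))*\<beta> = 0" by (simp_all add: algebra_simps)
    with `\<alpha>>0` `\<beta>>0` h5 show False unfolding PS_def by blast
  qed
  have n2: "\<not>(\<exists>\<alpha>>0. \<exists>\<beta>>0. (-p - 1/2)*\<alpha> + (-q)*\<beta> = 0 \<and> (-r)*\<alpha> + (-w - 1/2)*\<beta> = 0)"
  proof
    assume "\<exists>\<alpha>>0. \<exists>\<beta>>0. (-p - 1/2)*\<alpha> + (-q)*\<beta> = 0 \<and> (-r)*\<alpha> + (-w - 1/2)*\<beta> = 0"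
    then obtain \<alpha> \<beta> where "\<alpha>>0" "\<beta>>0" "(-p - 1/2)*\<alpha> + (-q)*\<beta> = 0" "(-r)*\<alpha> + (-w - 1/2)*\<beta> = 0" by blast
    then have "(p - (-1/2))*\<alpha> + q*\<beta> = 0" "r*\<alpha> + (w - (-1/2))*\<beta> = 0" by (simp_all add: algebra_simps)
    with `\<alpha>>0` `\<beta>>0` h3 show False unfolding PS_def by blast
  qed
  from h1 n1 have "(p = 1/2 \<and> r \<ge> 0) \<or> (w = 1/2 \<and> q \<ge> 0)" unfolding PS_def by auto
  then show ?thesis
  proof
    assume A: "p = 1/2 \<and> r \<ge> 0"
    then have r: "r > 0" using h5 unfolding PS_def by force
    have "w = -1/2 \<and> q \<le> 0" using h4 n2 A r unfolding PS_def by auto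
    then have w: "w = -1/2" and q: "q < 0" using h3 unfolding PS_def by force+
    have n0: "\<not>(0 = p \<and> 0 \<le> r)" "\<not>(0 = w \<and> 0 \<le> q)" using A w by auto
    have "\<exists>\<alpha>>0. \<exists>\<beta>>0. (p - 0)*\<alpha> + q*\<beta> = 0 \<and> r*\<alpha> + (w - 0)*\<beta> = 0"
      using h2 n0 unfolding PS_def by blast
    then obtain \<alpha> \<beta> where ab0: "\<alpha>>0" "\<beta>>0" "p*\<alpha> + q*\<beta> = 0" "r*\<alpha> + w*\<beta> = 0"
      by auto
    have pv: "p = 1/2" using A by simp
    have ab: "\<alpha>>0" "\<beta>>0" "(1/2)*\<alpha> + q*\<beta> = 0" "r*\<alpha> + (-1/2)*\<beta> = 0"
      using ab0 by (simp_all only: pv w)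
    then have "\<alpha> = -2*q*\<beta>" by simp
    with ab(4) have "\<beta>*(-2*q*r - 1/2) = 0" by (simp add: algebra_simps)
    with ab(2) have "q*r = -1/4" by simp
    then show ?thesis using A w q r by simp
  next
    assume A: "w = 1/2 \<and> q \<ge> 0"
    then have q: "q > 0" using h5 unfolding PS_def by force
    have "p = -1/2 \<and> r \<le> 0" using h4 n2 A q unfolding PS_def by auto
    then have p: "p = -1/2" and r: "r < 0" using h3 unfolding PS_def by force+
    have n0: "\<not>(0 = p \<and> 0 \<le> r)" "\<not>(0 = w \<and> 0 \<le> q)" using A p by auto
    have "\<exists>\<alpha>>0. \<exists>\<beta>>0. (p - 0)*\<alpha> + q*\<beta> = 0 \<and> r*\<alpha> + (w - 0)*\<beta> = 0"
      using h2 n0 unfolding PS_def by blast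
    then obtain \<alpha> \<beta> where ab0: "\<alpha>>0" "\<beta>>0" "p*\<alpha> + q*\<beta> = 0" "r*\<alpha> + w*\<beta> = 0"
      by auto
    have wv: "w = 1/2" using A by simp
    have ab: "\<alpha>>0" "\<beta>>0" "(-1/2)*\<alpha> + q*\<beta> = 0" "r*\<alpha> + (1/2)*\<beta> = 0"
      using ab0 by (simp_all only: p wv)
    then have "\<alpha> = 2*q*\<beta>" by simp
    with ab(4) have "\<beta>*(2*q*r + 1/2) = 0" by (simp add: algebra_simps)
    with ab(2) have "q*r = -1/4" by simp
    then show ?thesis using A p q r by simp
  qed
qed

lemma entries:
  fixes a c d e :: real
  assumes "((p = 1/2 \<and> w = -1/2 \<and> q < 0 \<and> r > 0) \<or> (p = -1/2 \<and> w = 1/2 \<and> q > 0 \<and> r < 0)) \<and> q*r = -1/4"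
    and "p = (a+c+d+e)/2" "q = (-a+c-d+e)/2" "r = (-a-c+d+e)/2" "w = (a-c-d+e)/2"
  shows "a + e = 0 \<and> a^2 + c*d = 0 \<and> ((c + d = 1 \<and> c \<le> 0) \<or> (c + d = -1 \<and> c \<ge> 0))"
proof -
  have a: "a = (p+w-q-r)/2" and c: "c = (p-w+q-r)/2" and d: "d = (p-w-q+r)/2" and e: "e = (p+w+q+r)/2"
    using assms(2-5) by (simp_all add: field_simps)
  have sq: "(r-q)^2 = (r+q)^2 + 1" using assms(1) by (simp add: power2_eq_square algebra_simps)
  have pp: "p = 1/2 \<or> p = -1/2" and ww: "w = 1/2 \<or> w = -1/2" using assms(1) by auto
  have pw: "p + w = 0" "p^2 = 1/4" "w^2 = 1/4" "4*q*r = -1"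
    subgoal using assms(1) by auto
    subgoal using pp by (elim disjE; hypsubst; simp add: power2_eq_square)
    subgoal using ww by (elim disjE; hypsubst; simp add: power2_eq_square)
    subgoal using assms(1) by auto
    done
  have "4*(a^2 + c*d) = 2*p^2 + 2*w^2 - 2*(p+w)*(q+r) + 4*q*r"
    unfolding a c d by (simp add: power2_eq_square field_simps)
  then have "a^2 + c*d = 0" using pw by simp
  moreover have "p + w = a + e" using assms(2,5) by argo
  then have "a + e = 0" using pw(1) by argo
  moreover have "(c + d = 1 \<and> c \<le> 0) \<or> (c + d = -1 \<and> c \<ge> 0)"
    using assms(1)
  proof (elim conjE disjE)
    assume P: "p = 1/2" and W: "w = -1/2" and "q < 0" "r > 0"
    moreover have "r - q \<ge> 1"
    proof (rule ccontr)
      assume "\<not> r - q \<ge> 1"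
      then have "(r-q)^2 < 1^2" using `q<0` `r>0` by (intro power_strict_mono) auto
      then have "(r-q)^2 < 1" "(q-r)^2 < 1" by (simp_all add: power2_commute)
      with sq zero_le_power2[of "r+q"] show False by linarith
    qed
    ultimately show ?thesis unfolding c d P W by argo
  next
    assume P: "p = -1/2" and W: "w = 1/2" and "q > 0" "r < 0"
    moreover have "q - r \<ge> 1"
    proof (rule ccontr)
      assume "\<not> q - r \<ge> 1"
      then have "(q-r)^2 < 1^2" using `q>0` `r<0` by (intro power_strict_mono) auto
      then have "(r-q)^2 < 1" "(q-r)^2 < 1" by (simp_all add: power2_commute)
      with sq zero_le_power2[of "r+q"] show False by linarith
    qed
    ultimately show ?thesis unfolding c d P W by argo
  qed
  ultimately show ?thesis by blast
qed

lemma final_form: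
  fixes a c d e :: real
  assumes "a + e = 0" "a^2 + c*d = 0" "(c + d = 1 \<and> c \<le> 0) \<or> (c + d = -1 \<and> c \<ge> 0)"
  shows "\<exists>b s t. b \<ge> 0 \<and> s \<in> {1, -1} \<and> t \<in> {1, -1} \<and>
     a = s * sqrt (b^2 + b) \<and> c = - t * b \<and> d = t * (b + 1) \<and> e = - s * sqrt (b^2 + b)"
proof -
  define s :: real where "s = (if a \<ge> 0 then 1 else -1)"
  have s: "s \<in> {1,-1}" "a = s * \<bar>a\<bar>" by (auto simp: s_def)
  from assms(3) show ?thesis
  proof
    assume H: "c + d = 1 \<and> c \<le> 0"
    have dd: "d = 1 - c" using H by simp
    have "c*d = c - c*c" unfolding dd by (simp add: algebra_simps)
    then have "(-c)^2 + (-c) = a^2" using assms(2) by (simp add: power2_eq_square)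
    then have "sqrt ((-c)^2 + (-c)) = \<bar>a\<bar>" by simp
    then show ?thesis using s H assms(1)
      by (intro exI[of _ "-c"] exI[of _ s] exI[of _ 1]) (auto simp: algebra_simps)
  next
    assume H: "c + d = -1 \<and> c \<ge> 0"
    have dd: "d = -1 - c" using H by simp
    have "c*d = -c - c*c" unfolding dd by (simp add: algebra_simps)
    then have "c^2 + c = a^2" using assms(2) by (simp add: power2_eq_square)
    then have "sqrt (c^2 + c) = \<bar>a\<bar>" by simp
    then show ?thesis using s H assms(1)
      by (intro exI[of _ c] exI[of _ s] exI[of _ "-1"]) (auto simp: algebra_simps)
  qed
qed


definition pA :: "real^2^2 \<Rightarrow> real" where "pA A = (A$1$1 + A$1$2 + A$2$1 + A$2$2)/2"
definition qA :: "real^2^2 \<Rightarrow> real" where "qA A = (-A$1$1 + A$1$2 - A$2$1 + A$2$2)/2"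
definition rA :: "real^2^2 \<Rightarrow> real" where "rA A = (-A$1$1 - A$1$2 + A$2$1 + A$2$2)/2"
definition wA :: "real^2^2 \<Rightarrow> real" where "wA A = (A$1$1 - A$1$2 - A$2$1 + A$2$2)/2"

lemma L_eig_PS: "l \<in> L_eig A \<longleftrightarrow> PS (pA A) (qA A) (rA A) (wA A) l"
  unfolding L_eig_real par_char PS_def pA_def qA_def rA_def wA_def by (rule refl)

lemma neg_vals: "pA (-A) = - pA A" "qA (-A) = - qA A" "rA (-A) = - rA A" "wA (-A) = - wA A"
  unfolding pA_def qA_def rA_def wA_def vector_uminus_component by argo+

lemma L_eig_PS_neg: "l \<in> L_eig (-A) \<longleftrightarrow> PS (- pA A) (- qA A) (- rA A) (- wA A) l"
  by (simp only: L_eig_PS neg_vals)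

lemma E21_vals: "pA E21 = 1/2" "qA E21 = -1/2" "rA E21 = 1/2" "wA E21 = -1/2"
  by (simp_all add: pA_def qA_def rA_def wA_def E21_def)

theorem lemma4p5:
  fixes \<phi> :: "real^2^2 \<Rightarrow> real^2^2"
  assumes "linear \<phi>"
    and "\<And>A. L_eig (\<phi> A) = L_eig A"
  shows "\<exists>b s t. b \<ge> 0 \<and> s \<in> {1, -1} \<and> t \<in> {1, -1} \<and>
    \<phi> E21 = (\<chi> i j. if i = 1 \<and> j = 1 then s * sqrt (b^2 + b)
                   else if i = 1 \<and> j = 2 then - t * b
                   else if i = 2 \<and> j = 1 then t * (b + 1)
                   else - s * sqrt (b^2 + b))"
proof -
  define M where "M = \<phi> E21"
  have L1: "L_eig M = L_eig E21" unfolding M_def using assms(2) by simp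
  have "\<phi> (- E21) = - M" unfolding M_def using assms(1) by (simp add: linear_neg)
  then have L2: "L_eig (- M) = L_eig (- E21)" using assms(2)[of "- E21"] by simp
  have e1: "PS (1/2) (-1/2) (1/2) (-1/2) (1/2)" unfolding PS_def by simp
  have e2: "PS (1/2) (-1/2) (1/2) (-1/2) 0" unfolding PS_def
    by (intro disjI2 exI[of _ 1]) simp
  have e3: "\<not> PS (1/2) (-1/2) (1/2) (-1/2) (-1/2)" unfolding PS_def by auto
  have e4: "PS (-(1/2)) (-(-1/2)) (-(1/2)) (-(-1/2)) (1/2)" unfolding PS_def by simp
  have e5: "\<not> PS (-(1/2)) (-(-1/2)) (-(1/2)) (-(-1/2)) (-1/2)" unfolding PS_def by auto
  have m1: "1/2 \<in> L_eig E21" unfolding L_eig_PS E21_vals by (rule e1)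
  have m2: "0 \<in> L_eig E21" unfolding L_eig_PS E21_vals by (rule e2)
  have m3: "-1/2 \<notin> L_eig E21" unfolding L_eig_PS E21_vals by (rule e3)
  have m4: "1/2 \<in> L_eig (-E21)" unfolding L_eig_PS_neg E21_vals by (rule e4)
  have m5: "-1/2 \<notin> L_eig (-E21)" unfolding L_eig_PS_neg E21_vals by (rule e5)
  have h1: "PS (pA M) (qA M) (rA M) (wA M) (1/2)" using m1 L1 unfolding L_eig_PS[symmetric] by simp
  have h2: "PS (pA M) (qA M) (rA M) (wA M) 0" using m2 L1 unfolding L_eig_PS[symmetric] by simp
  have h3: "\<not> PS (pA M) (qA M) (rA M) (wA M) (-1/2)" using m3 L1 unfolding L_eig_PS[symmetric] by simp
  have h4: "PS (- pA M) (- qA M) (- rA M) (- wA M) (1/2)" using m4 L2 unfolding L_eig_PS_neg[symmetric] by simp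
  have h5: "\<not> PS (- pA M) (- qA M) (- rA M) (- wA M) (-1/2)" using m5 L2 unfolding L_eig_PS_neg[symmetric] by simp
  have K: "a + e = 0 \<and> a^2 + c*d = 0 \<and> ((c + d = 1 \<and> c \<le> 0) \<or> (c + d = -1 \<and> c \<ge> 0))"
    if "a = M$1$1" "c = M$1$2" "d = M$2$1" "e = M$2$2" for a c d e
    apply (rule entries[OF key[OF h1 h2 h3 h4 h5]])
    using that by (simp_all add: pA_def qA_def rA_def wA_def)
  then obtain b s t where bst: "b \<ge> 0" "s \<in> {1, -1}" "t \<in> {1, -1}"
     "M$1$1 = s * sqrt (b^2 + b)" "M$1$2 = - t * b" "M$2$1 = t * (b + 1)" "M$2$2 = - s * sqrt (b^2 + b)"
    using final_form[of "M$1$1" "M$2$2" "M$1$2" "M$2$1"] by blast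
  have "M = (\<chi> i j. if i = 1 \<and> j = 1 then s * sqrt (b^2 + b)
                   else if i = 1 \<and> j = 2 then - t * b
                   else if i = 2 \<and> j = 1 then t * (b + 1)
                   else - s * sqrt (b^2 + b))"
    using bst(4-7) by (simp add: vec_eq_iff forall_2)
  then show ?thesis using bst(1-3) unfolding M_def by blast
qed

end
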